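(* Let $\Bbbk$ be a field of characteristic zero, $n \geq 4$, $S=\Bbbk[x_1,\ldots,x_n]$. If $I\subset S$ is an artinian ideal minimally generated by $n+1$ quadratic monomials, then $S/I$ has the WLP.
   Context: A standard graded artinian algebra $A=\bigoplus_i A_i$ has the WLP if there is a linear form $\ell$ such that $\times\ell:A_k\to A_{k+1}$ has maximal rank (is injective or surjective) for every $k$; for monomial quotients $S/I$ this is equivalent to taking $\ell=x_1+\cdots+x_n$. *)

theory Defs
  imports Main
begin

text \<open>Monomials of S = k[x_0,...,x_{n-1}] are represented by exponent vectors
  (functions nat => nat vanishing from index n on).  The quotient A = S/I has as k-basis the standard
  monomials (those not in I), graded by degree; A_k is represented as the space of
  k-valued functions on monomials supported on the standard monomials of degree k.\<close>

type_synonym mono = "nat \<Rightarrow> nat"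

definition monomials :: "nat \<Rightarrow> mono set" where
  "monomials n = {a. \<forall>i\<ge>n. a i = 0}"

definition mdeg :: "nat \<Rightarrow> mono \<Rightarrow> nat" where
  "mdeg n a = (\<Sum>i<n. a i)"

definition mdvd :: "mono \<Rightarrow> mono \<Rightarrow> bool" where
  "mdvd a b \<longleftrightarrow> (\<forall>i. a i \<le> b i)"

definition in_mideal :: "mono set \<Rightarrow> mono \<Rightarrow> bool" where
  "in_mideal G m \<longleftrightarrow> (\<exists>g\<in>G. mdvd g m)"

definition var_exp :: "nat \<Rightarrow> mono" where
  "var_exp i = (\<lambda>j. if j = i then 1 else 0)"

definition std_monos :: "nat \<Rightarrow> mono set \<Rightarrow> nat \<Rightarrow> mono set" where
  "std_monos n G k = {a \<in> monomials n. mdeg n a = k \<and> \<not> in_mideal G a}"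

text \<open>S/I is artinian: finite-dimensional, i.e. finitely many standard monomials.\<close>
definition artinian_mideal :: "nat \<Rightarrow> mono set \<Rightarrow> bool" where
  "artinian_mideal n G \<longleftrightarrow> finite {a \<in> monomials n. \<not> in_mideal G a}"

definition minimal_gens :: "mono set \<Rightarrow> bool" where
  "minimal_gens G \<longleftrightarrow> (\<forall>g\<in>G. \<not> in_mideal (G - {g}) g)"

definition graded_piece :: "nat \<Rightarrow> mono set \<Rightarrow> nat \<Rightarrow> (mono \<Rightarrow> 'a::zero) set" where
  "graded_piece n G k = {f. \<forall>a. a \<notin> std_monos n G k \<longrightarrow> f a = 0}"

text \<open>Multiplication by the linear form l = sum_{i<n} c_i x_i, from A_k to A_{k+1}.\<close>
definition mult_lin :: "nat \<Rightarrow> mono set \<Rightarrow> (nat \<Rightarrow> 'a::comm_ring_1) \<Rightarrow> nat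
    \<Rightarrow> (mono \<Rightarrow> 'a) \<Rightarrow> (mono \<Rightarrow> 'a)" where
  "mult_lin n G c k f = (\<lambda>b. if b \<in> std_monos n G (k+1) then
      (\<Sum>i<n. if 0 < b i \<and> (\<lambda>j. b j - var_exp i j) \<in> std_monos n G k
              then c i * f (\<lambda>j. b j - var_exp i j) else 0)
    else 0)"

definition max_rank_mult :: "nat \<Rightarrow> mono set \<Rightarrow> (nat \<Rightarrow> 'a::comm_ring_1) \<Rightarrow> nat \<Rightarrow> bool" where
  "max_rank_mult n G c k \<longleftrightarrow>
     inj_on (mult_lin n G c k) (graded_piece n G k)
     \<or> mult_lin n G c k ` graded_piece n G k = graded_piece n G (k+1)"

definition has_WLP :: "'a::field itself \<Rightarrow> nat \<Rightarrow> mono set \<Rightarrow> bool" where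
  "has_WLP _ n G \<longleftrightarrow> (\<exists>c :: nat \<Rightarrow> 'a. \<forall>k. max_rank_mult n G c k)"

end

theory Submission
  imports Defs
begin

locale sl2 =
  fixes V :: "nat \<Rightarrow> ('x \<Rightarrow> 'a::field_char_0) set"
    and U :: "nat \<Rightarrow> ('x \<Rightarrow> 'a) \<Rightarrow> ('x \<Rightarrow> 'a)"
    and D :: "nat \<Rightarrow> ('x \<Rightarrow> 'a) \<Rightarrow> ('x \<Rightarrow> 'a)"
    and N :: nat
  assumes U_lin: "U m (\<lambda>x. c * f x + d * g x) = (\<lambda>x. c * U m f x + d * U m g x)"
    and D_lin: "D m (\<lambda>x. c * f x + d * g x) = (\<lambda>x. c * D m f x + d * D m g x)"
    and V_lin: "f \<in> V m \<Longrightarrow> g \<in> V m \<Longrightarrow> (\<lambda>x. c * f x + d * g x) \<in> V m"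
    and V_zero: "(\<lambda>x. 0) \<in> V m"
    and U_V: "f \<in> V m \<Longrightarrow> U m f \<in> V (Suc m)"
    and D_V: "f \<in> V (Suc m) \<Longrightarrow> D (Suc m) f \<in> V m"
    and D_0: "f \<in> V 0 \<Longrightarrow> D 0 f = (\<lambda>x. 0)"
    and comm: "f \<in> V m \<Longrightarrow> D (Suc m) (U m f) = (\<lambda>x. U (m - 1) (D m f) x + of_int (int N - 2 * int m) * f x)"
    and V_top: "N < m \<Longrightarrow> f \<in> V m \<Longrightarrow> f = (\<lambda>x. 0)"
begin

lemma U_zero: "U m (\<lambda>x. 0) = (\<lambda>x. 0)"
  using U_lin[of m 0 "\<lambda>x. 0" 0 "\<lambda>x. 0"] by simp

lemma D_zero: "D m (\<lambda>x. 0) = (\<lambda>x. 0)"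
  using D_lin[of m 0 "\<lambda>x. 0" 0 "\<lambda>x. 0"] by simp

lemma inj_aux:
  "f \<in> V m \<Longrightarrow> 2*m < N \<Longrightarrow> (\<forall>x. of_nat l * f x + D (Suc m) (U m f) x = 0) \<Longrightarrow> f = (\<lambda>x. 0)"
proof (induction m arbitrary: l f)
  case 0
  have c: "D (Suc 0) (U 0 f) = (\<lambda>x. U (0 - 1) (D 0 f) x + of_int (int N) * f x)"
    using comm[OF 0(1)] by simp
  have "D 0 f = (\<lambda>x. 0)" using D_0 0(1) by simp
  then have c2: "D (Suc 0) (U 0 f) = (\<lambda>x. of_nat N * f x)" using c U_zero by simp
  have "N > 0" using 0 by simp
  show ?case
  proof
    fix x
    have "of_nat l * f x + of_nat N * f x = 0" using 0(3) c2 by metis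
    then have "of_nat (l + N) * f x = 0" by (simp add: distrib_right)
    moreover have "(of_nat (l + N) :: 'a) \<noteq> 0" using \<open>N > 0\<close> by (simp only: of_nat_eq_0_iff)
    ultimately show "f x = 0" by simp
  qed
next
  case (Suc m)
  define q where "q = N - 2 * Suc m"
  have qpos: "q > 0" using Suc(3) q_def by simp
  have qi: "(of_int (int N - 2 * int (Suc m)) :: 'a) = of_nat q"
    using Suc(3) q_def by (simp add: of_nat_diff)
  define g where "g = D (Suc m) f"
  have gV: "g \<in> V m" using D_V Suc(2) g_def by simp
  have c: "\<forall>x. D (Suc (Suc m)) (U (Suc m) f) x = U m g x + of_nat q * f x"
    using comm[OF Suc(2)] qi g_def by simp
  have e1: "\<forall>x. of_nat (l + q) * f x + 1 * U m g x = 0"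
    using Suc(4) c by (simp add: distrib_right algebra_simps)
  hence "(\<lambda>x. of_nat (l + q) * f x + 1 * U m g x) = (\<lambda>x. 0)" by auto
  hence "D (Suc m) (\<lambda>x. of_nat (l + q) * f x + 1 * U m g x) = (\<lambda>x. 0)" using D_zero by simp
  hence "\<forall>x. of_nat (l + q) * g x + 1 * D (Suc m) (U m g) x = 0"
    unfolding D_lin g_def by metis
  hence "\<forall>x. of_nat (l + q) * g x + D (Suc m) (U m g) x = 0" by simp
  moreover have "2 * m < N" using Suc(3) by simp
  ultimately have g0: "g = (\<lambda>x. 0)" using Suc.IH[OF gV] by blast
  show ?case
  proof
    fix x
    have "l + q \<noteq> 0" using qpos by simp
    hence nz: "(of_nat (l + q) :: 'a) \<noteq> 0" by (metis of_nat_eq_0_iff)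
    have "of_nat (l + q) * f x = 0" using e1[rule_format, of x] unfolding g0 U_zero by simp
    then show "f x = 0" using nz by (metis mult_eq_0_iff)
  qed
qed

lemma inj: assumes "2*m < N" shows "inj_on (U m) (V m)"
proof (rule inj_onI)
  fix f g assume f: "f \<in> V m" and g: "g \<in> V m" and e: "U m f = U m g"
  define h where "h = (\<lambda>x. 1 * f x + (-1) * g x)"
  have hV: "h \<in> V m" unfolding h_def using V_lin f g by blast
  have "U m h = (\<lambda>x. 0)" unfolding h_def U_lin e by simp
  hence "\<forall>x. of_nat 0 * h x + D (Suc m) (U m h) x = 0" using D_zero by simp
  hence "h = (\<lambda>x. 0)" using inj_aux[OF hV assms] by blast
  thus "f = g" unfolding h_def by (auto simp: fun_eq_iff)
qed

lemma surj_aux: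
  "N + 1 - m = d \<Longrightarrow> N < 2*m \<Longrightarrow> g \<in> V m \<Longrightarrow> \<exists>f\<in>V m. \<forall>x. of_nat l * f x + U (m - 1) (D m f) x = g x"
proof (induction d arbitrary: m l g)
  case 0
  then have "g = (\<lambda>x. 0)" using V_top[of m g] by simp
  then show ?case using V_zero D_zero U_zero by (intro bexI[of _ "\<lambda>x. 0"]) auto
next
  case (Suc d)
  define p where "p = 2 * m - N"
  have ppos: "p > 0" using Suc(3) p_def by simp
  have pi: "(of_int (int N - 2 * int m) :: 'a) = - of_nat p"
    using Suc(3) p_def by (simp add: of_nat_diff)
  have UgV: "U m g \<in> V (Suc m)" using U_V Suc(4) by simp
  obtain y where yV: "y \<in> V (Suc m)"
    and y: "\<forall>x. of_nat (l + p) * y x + U m (D (Suc m) y) x = U m g x"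
  proof -
    have "N + 1 - Suc m = d" "N < 2 * Suc m" using Suc(2,3) by auto
    then show ?thesis using Suc.IH[where m="Suc m" and l="l + p" and g="U m g"] UgV that by fastforce
  qed
  define r :: 'a where "r = of_nat (l + p)"
  have "l + p \<noteq> 0" using ppos by simp
  hence r0: "r \<noteq> 0" unfolding r_def by (metis of_nat_eq_0_iff)
  define f where "f = (\<lambda>x. inverse r * g x + (- inverse r) * D (Suc m) y x)"
  have fV: "f \<in> V m" unfolding f_def using V_lin Suc(4) D_V yV by blast
  have Uf: "U m f = y"
  proof
    fix x
    have "U m f x = inverse r * U m g x + (- inverse r) * U m (D (Suc m) y) x"
      unfolding f_def U_lin by simp
    also have "\<dots> = inverse r * (U m g x - U m (D (Suc m) y) x)" by (simp add: algebra_simps)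
    also have "\<dots> = inverse r * (r * y x)" using y r_def by (metis add_diff_cancel_right')
    also have "\<dots> = y x" using r0 by simp
    finally show "U m f x = y x" .
  qed
  have c: "\<forall>x. D (Suc m) y x = U (m - 1) (D m f) x - of_nat p * f x"
    using comm[OF fV] Uf pi by simp
  show ?case
  proof (rule bexI[OF _ fV], intro allI)
    fix x
    have "of_nat l * f x + U (m - 1) (D m f) x = of_nat l * f x + D (Suc m) y x + of_nat p * f x"
      using c by simp
    also have "\<dots> = r * f x + D (Suc m) y x" by (simp add: r_def algebra_simps)
    also have "\<dots> = g x" unfolding f_def using r0 by (simp add: field_simps)
    finally show "of_nat l * f x + U (m - 1) (D m f) x = g x" .
  qed
qed

lemma surj: assumes "N < 2*m" "g \<in> V m" shows "\<exists>f\<in>V (m - 1). U (m - 1) f = g"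
proof -
  obtain f where fV: "f \<in> V m" and f: "\<forall>x. of_nat 0 * f x + U (m - 1) (D m f) x = g x"
    using surj_aux[OF refl assms] by blast
  have m: "m = Suc (m - 1)" using assms by simp
  have "D m f \<in> V (m - 1)" using D_V[of f "m - 1"] fV m by simp
  moreover have "U (m - 1) (D m f) = g" using f by auto
  ultimately show ?thesis by blast
qed

end

definition stdm :: "nat \<Rightarrow> nat \<Rightarrow> nat \<Rightarrow> nat \<Rightarrow> mono set" where
  "stdm n a b k = {T. (\<forall>l\<ge>n. T l = 0) \<and> (\<Sum>l<n. T l) = k \<and> (\<forall>l. T l \<le> 1) \<and> \<not> (T a = 1 \<and> T b = 1)}"

lemma sum_plus_var: "i < n \<Longrightarrow> (\<Sum>l<n. S l + var_exp i l) = (\<Sum>l<n. S l) + 1"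
  by (simp add: sum.distrib var_exp_def)

lemma sum_minus_var: assumes "i < n" "0 < S i" shows "(\<Sum>l<n. S l - var_exp i l) + 1 = (\<Sum>l<n. S l)"
proof -
  have "(\<Sum>l<n. S l - var_exp i l) + 1 = (\<Sum>l<n. S l - var_exp i l) + (\<Sum>l<n. var_exp i l)"
    using assms by (simp add: var_exp_def)
  also have "\<dots> = (\<Sum>l<n. S l - var_exp i l + var_exp i l)" by (simp add: sum.distrib)
  also have "\<dots> = (\<Sum>l<n. S l)" using assms by (intro sum.cong) (auto simp: var_exp_def)
  finally show ?thesis .
qed

locale wlp_ctx =
  fixes n a b :: nat
  assumes a: "a < n" and b: "b < n" and ab: "a \<noteq> b"
begin

abbreviation "st \<equiv> stdm n a b"

lemma st_lt: assumes "S \<in> st m" "0 < S j" shows "j < n"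
proof (rule ccontr)
  assume "\<not> j < n" then have "S j = 0" using assms(1) by (simp add: stdm_def)
  then show False using assms(2) by simp
qed

lemma st_01: assumes "S \<in> st m" shows "0 < S j \<longleftrightarrow> S j = 1"
proof -
  have "S j \<le> 1" using assms by (simp add: stdm_def)
  then show ?thesis by auto
qed

lemma plus_in: assumes "S \<in> st m" "i < n"
  shows "(\<lambda>l. S l + var_exp i l) \<in> st (Suc m) \<longleftrightarrow>
     S i = 0 \<and> \<not> (S a + var_exp i a = 1 \<and> S b + var_exp i b = 1)"
proof -
  have s: "(\<Sum>l<n. S l + var_exp i l) = Suc m" using assms sum_plus_var[of i n S] by (simp add: stdm_def)
  have "(\<forall>l. S l + var_exp i l \<le> 1) \<longleftrightarrow> S i = 0"
  proof
    assume "\<forall>l. S l + var_exp i l \<le> 1"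
    then have "S i + 1 \<le> 1" by (metis var_exp_def)
    then show "S i = 0" by simp
  next
    assume "S i = 0"
    then show "\<forall>l. S l + var_exp i l \<le> 1" using assms(1) unfolding stdm_def var_exp_def by auto
  qed
  moreover have "\<forall>l\<ge>n. S l + var_exp i l = 0" using assms unfolding stdm_def var_exp_def by auto
  ultimately show ?thesis using s unfolding stdm_def by auto
qed

lemma minus_in: assumes "S \<in> st m" "0 < S j"
  shows "(\<lambda>l. S l - var_exp j l) \<in> st (m - 1)"
proof -
  have j: "j < n" using st_lt assms by blast
  have "(\<Sum>l<n. S l - var_exp j l) + 1 = m" using sum_minus_var[of j n S, OF j assms(2)] assms(1) by (simp add: stdm_def)
  then have "(\<Sum>l<n. S l - var_exp j l) = m - 1" by simp
  then show ?thesis using assms(1) unfolding stdm_def var_exp_def by auto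
qed


lemma P5: assumes S: "S \<in> st m" and ij: "i \<noteq> j" "i \<noteq> b" "j \<noteq> b" and i: "i < n"
  and Si: "S i = 0" and Sj: "0 < S j"
  and T: "(\<lambda>l. S l + var_exp i l - var_exp j l) \<in> st m"
  shows "(\<lambda>l. S l + var_exp i l) \<in> st (Suc m)"
proof -
  have "\<not> (S a + var_exp i a = 1 \<and> S b + var_exp i b = 1)"
  proof (cases "a = i")
    case True
    then have "S a + var_exp i a - var_exp j a = 1" using Si ij by (simp add: var_exp_def)
    then have "S b + var_exp i b - var_exp j b \<noteq> 1" using T unfolding stdm_def by auto
    then show ?thesis using ij by (simp add: var_exp_def)
  next
    case False
    then show ?thesis using S ij unfolding stdm_def var_exp_def by auto
  qed
  then show ?thesis using plus_in[OF S i] Si by simp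
qed

lemma mm_pp: "(\<lambda>l. S l + var_exp i l - var_exp i l) = S"
  by (simp add: var_exp_def)

lemma pp_mm: "0 < S i \<Longrightarrow> (\<lambda>l. S l - var_exp i l + var_exp i l) = S"
  by (auto simp: var_exp_def fun_eq_iff)

lemma pm_swap: "i \<noteq> j \<Longrightarrow> (\<lambda>l. S l + var_exp i l - var_exp j l) = (\<lambda>l. S l - var_exp j l + var_exp i l)"
  by (auto simp: var_exp_def fun_eq_iff)

definition cc :: "nat \<Rightarrow> 'a::field" where "cc i = (if i = b then 0 else 1)"

definition Lt :: "mono \<Rightarrow> (mono \<Rightarrow> 'a::field) \<Rightarrow> nat \<Rightarrow> nat \<Rightarrow> nat \<Rightarrow> 'a" where
  "Lt S f m i j = (if i \<noteq> b \<and> S i = 0 \<and> (\<lambda>l. S l + var_exp i l) \<in> st (Suc m)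
      \<and> 0 < S j + var_exp i j \<and> (\<lambda>l. S l + var_exp i l - var_exp j l) \<in> st m
     then cc j * f (\<lambda>l. S l + var_exp i l - var_exp j l) else 0)"

definition Rt :: "mono \<Rightarrow> (mono \<Rightarrow> 'a::field) \<Rightarrow> nat \<Rightarrow> nat \<Rightarrow> nat \<Rightarrow> 'a" where
  "Rt S f m i j = (if 0 < S j \<and> (\<lambda>l. S l - var_exp j l) \<in> st (m - 1) \<and> i \<noteq> b
      \<and> S i - var_exp j i = 0 \<and> (\<lambda>l. S l - var_exp j l + var_exp i l) \<in> st m
     then cc j * f (\<lambda>l. S l - var_exp j l + var_exp i l) else 0)"

lemma LR: assumes S: "S \<in> st m" and i: "i < n" and j: "j < n"
  shows "Lt S f m i j = Rt S f m i j + (if i = j then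
     (if i \<noteq> b \<and> S i = 0 \<and> (\<lambda>l. S l + var_exp i l) \<in> st (Suc m) then f S else 0)
     - (if i \<noteq> b \<and> 0 < S i then f S else 0) else 0)"
proof (cases "i = j")
  case True
  have L: "Lt S f m i j = (if i \<noteq> b \<and> S i = 0 \<and> (\<lambda>l. S l + var_exp i l) \<in> st (Suc m) then f S else 0)"
    unfolding Lt_def True mm_pp using S by (auto simp: cc_def var_exp_def)
  have R: "Rt S f m i j = (if i \<noteq> b \<and> 0 < S i then f S else 0)"
  proof (cases "0 < S i")
    case True
    then have "S i = 1" using st_01 S by blast
    then show ?thesis unfolding Rt_def \<open>i = j\<close>[symmetric] pp_mm[of S i, OF True]
      using minus_in[OF S True] S True by (auto simp: cc_def var_exp_def)
  qed (auto simp: Rt_def \<open>i = j\<close>[symmetric])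
  show ?thesis using L R True by simp
next
  case False
  show ?thesis
  proof (cases "j = b")
    case True
    then show ?thesis using False by (simp add: Lt_def Rt_def cc_def)
  next
    case jb: False
    have vij: "var_exp i j = 0" "var_exp j i = 0" using False by (auto simp: var_exp_def)
    have Le: "Lt S f m i j = (if i \<noteq> b \<and> S i = 0 \<and> (\<lambda>l. S l + var_exp i l) \<in> st (Suc m)
      \<and> 0 < S j \<and> (\<lambda>l. S l + var_exp i l - var_exp j l) \<in> st m
     then cc j * f (\<lambda>l. S l + var_exp i l - var_exp j l) else 0)"
      unfolding Lt_def vij by simp
    have Re: "Rt S f m i j = (if 0 < S j \<and> (\<lambda>l. S l - var_exp j l) \<in> st (m - 1) \<and> i \<noteq> b
      \<and> S i = 0 \<and> (\<lambda>l. S l + var_exp i l - var_exp j l) \<in> st m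
     then cc j * f (\<lambda>l. S l + var_exp i l - var_exp j l) else 0)"
      unfolding Rt_def vij pm_swap[OF False] by simp
    have "Lt S f m i j = Rt S f m i j"
    proof (cases "i \<noteq> b \<and> S i = 0 \<and> 0 < S j \<and> (\<lambda>l. S l + var_exp i l - var_exp j l) \<in> st m")
      case True
      then have "(\<lambda>l. S l + var_exp i l) \<in> st (Suc m)" using P5[OF S False _ jb i] by blast
      moreover have "(\<lambda>l. S l - var_exp j l) \<in> st (m - 1)" using minus_in[OF S] True by blast
      ultimately show ?thesis unfolding Le Re using True by simp
    next
      case c: False
      then show ?thesis unfolding Le Re by auto
    qed
    then show ?thesis using False by simp
  qed
qed


definition DD :: "nat \<Rightarrow> (mono \<Rightarrow> 'a::field) \<Rightarrow> mono \<Rightarrow> 'a" where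
  "DD m g = (\<lambda>S. if 0 < m \<and> S \<in> st (m - 1) then (\<Sum>i<n. if i \<noteq> b \<and> S i = 0 \<and> (\<lambda>l. S l + var_exp i l) \<in> st m
      then g (\<lambda>l. S l + var_exp i l) else 0) else 0)"

definition UU :: "nat \<Rightarrow> (mono \<Rightarrow> 'a::field) \<Rightarrow> mono \<Rightarrow> 'a" where
  "UU m f = (\<lambda>T. if T \<in> st (Suc m) then (\<Sum>j<n. if 0 < T j \<and> (\<lambda>l. T l - var_exp j l) \<in> st m
      then cc j * f (\<lambda>l. T l - var_exp j l) else 0) else 0)"

lemma expL: assumes S: "S \<in> st m"
  shows "DD (Suc m) (UU m f) S = (\<Sum>i<n. \<Sum>j<n. Lt S f m i j)"
proof -
  have "DD (Suc m) (UU m f) S = (\<Sum>i<n. if i \<noteq> b \<and> S i = 0 \<and> (\<lambda>l. S l + var_exp i l) \<in> st (Suc m)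
      then UU m f (\<lambda>l. S l + var_exp i l) else 0)" using S by (simp add: DD_def)
  also have "\<dots> = (\<Sum>i<n. \<Sum>j<n. Lt S f m i j)"
    by (rule sum.cong[OF refl]) (auto simp: UU_def Lt_def intro!: sum.cong)
  finally show ?thesis .
qed

lemma st0: "S \<in> st 0 \<Longrightarrow> S j = 0"
  unfolding stdm_def by (cases "j < n") auto

lemma expR: assumes S: "S \<in> st m"
  shows "UU (m - 1) (DD m f) S = (\<Sum>j<n. \<Sum>i<n. Rt S f m i j)"
proof (cases m)
  case 0
  then have "S j = 0" for j using S st0 by blast
  then show ?thesis using 0 by (simp add: UU_def DD_def Rt_def)
next
  case (Suc m')
  have "UU (Suc m' - 1) (DD (Suc m') f) S = (\<Sum>j<n. if 0 < S j \<and> (\<lambda>l. S l - var_exp j l) \<in> st m'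
      then cc j * DD (Suc m') f (\<lambda>l. S l - var_exp j l) else 0)" using S Suc by (simp add: UU_def)
  also have "\<dots> = (\<Sum>j<n. \<Sum>i<n. Rt S f (Suc m') i j)"
    by (rule sum.cong[OF refl]) (auto simp: DD_def Rt_def sum_distrib_left intro!: sum.cong)
  finally show ?thesis using Suc by simp
qed

lemma card_O: assumes S: "S \<in> st m" shows "card {i\<in>{..<n}. 0 < S i} = m"
proof -
  have "m = (\<Sum>i<n. S i)" using S by (simp add: stdm_def)
  also have "\<dots> = (\<Sum>i<n. if 0 < S i then 1 else 0)"
    using S st_01[OF S] by (intro sum.cong) auto
  also have "\<dots> = card {i\<in>{..<n}. 0 < S i}"
    by (simp add: sum.inter_filter[symmetric])
  finally show ?thesis by simp
qed

lemma card_ZO: fixes S :: mono shows "card {i\<in>{..<n}. S i = 0} + card {i\<in>{..<n}. 0 < S i} = n"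
proof -
  have "card ({i\<in>{..<n}. S i = 0} \<union> {i\<in>{..<n}. 0 < S i}) = card {i\<in>{..<n}. S i = 0} + card {i\<in>{..<n}. 0 < S i}"
    by (rule card_Un_disjoint) auto
  moreover have "{i\<in>{..<n}. S i = 0} \<union> {i\<in>{..<n}. 0 < S i} = {..<n}" by auto
  ultimately show ?thesis by simp
qed

lemma count: assumes S: "S \<in> st m"
  shows "int (card {i\<in>{..<n}. i \<noteq> b \<and> S i = 0 \<and> (\<lambda>l. S l + var_exp i l) \<in> st (Suc m)})
       - int (card {i\<in>{..<n}. i \<noteq> b \<and> 0 < S i}) = int n - 1 - 2 * int m + (if S b = 0 then 0 else 1)"
proof -
  define Zb where "Zb = {i\<in>{..<n}. S i = 0}"
  define Ob where "Ob = {i\<in>{..<n}. 0 < S i}"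
  have cO: "card Ob = m" using card_O[OF S] Ob_def by simp
  have cZ: "card Zb + card Ob = n" using card_ZO Zb_def Ob_def by simp
  have UP: "{i\<in>{..<n}. i \<noteq> b \<and> S i = 0 \<and> (\<lambda>l. S l + var_exp i l) \<in> st (Suc m)}
     = {i\<in>{..<n}. i \<noteq> b \<and> S i = 0 \<and> \<not> (S a + var_exp i a = 1 \<and> S b + var_exp i b = 1)}"
    using plus_in[OF S] by auto
  show ?thesis
  proof (cases "S b = 0")
    case True
    have "{i\<in>{..<n}. i \<noteq> b \<and> S i = 0 \<and> \<not> (S a + var_exp i a = 1 \<and> S b + var_exp i b = 1)} = Zb - {b}"
      using True unfolding Zb_def var_exp_def by auto
    moreover have "b \<in> Zb" using True b Zb_def by simp
    moreover have "{i\<in>{..<n}. i \<noteq> b \<and> 0 < S i} = Ob" using True Ob_def by auto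
    moreover have "finite Zb" using Zb_def by simp
    moreover have "0 < card Zb" using \<open>b \<in> Zb\<close> \<open>finite Zb\<close> card_gt_0_iff by blast
    ultimately show ?thesis using UP cO cZ True by (simp add: card_Diff_singleton)
  next
    case False
    then have Sb: "S b = 1" using st_01[OF S, of b] by simp
    then have Sa: "S a = 0" using S st_01[OF S, of a] by (auto simp: stdm_def)
    have "{i\<in>{..<n}. i \<noteq> b \<and> S i = 0 \<and> \<not> (S a + var_exp i a = 1 \<and> S b + var_exp i b = 1)} = Zb - {a}"
      using Sa Sb ab unfolding Zb_def var_exp_def by auto
    moreover have "a \<in> Zb" using Sa a Zb_def by simp
    moreover have "{i\<in>{..<n}. i \<noteq> b \<and> 0 < S i} = Ob - {b}" using Ob_def by auto
    moreover have "b \<in> Ob" using Sb b Ob_def by simp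
    moreover have "finite Zb" "finite Ob" using Zb_def Ob_def by simp_all
    moreover have "0 < card Zb" using \<open>a \<in> Zb\<close> \<open>finite Zb\<close> card_gt_0_iff by blast
    moreover have "0 < card Ob" using \<open>b \<in> Ob\<close> \<open>finite Ob\<close> card_gt_0_iff by blast
    ultimately show ?thesis using UP cO cZ False by (simp add: card_Diff_singleton)
  qed
qed

lemma sum_ind: "(\<Sum>i<n. if P i then x else 0) = of_nat (card {i\<in>{..<n}. P i}) * (x::'a::field)"
  by (simp add: sum.inter_filter[symmetric])

lemma master: assumes S: "S \<in> st m"
  shows "DD (Suc m) (UU m f) S = UU (m - 1) (DD m f) S
     + of_int (int n - 1 - 2 * int m + (if S b = 0 then 0 else 1)) * (f S :: 'a::field_char_0)"
proof -
  define X where "X i = (if i \<noteq> b \<and> S i = 0 \<and> (\<lambda>l. S l + var_exp i l) \<in> st (Suc m) then f S else 0)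
     - (if i \<noteq> b \<and> 0 < S i then f S else 0)" for i
  have "DD (Suc m) (UU m f) S = (\<Sum>i<n. \<Sum>j<n. Rt S f m i j + (if i = j then X i else 0))"
  proof -
    have "\<And>i j. i<n \<Longrightarrow> j<n \<Longrightarrow> Lt S f m i j = Rt S f m i j + (if i = j then X i else 0)"
      unfolding X_def using LR[OF S] by blast
    then show ?thesis unfolding expL[OF S] by (intro sum.cong refl) auto
  qed
  also have "\<dots> = (\<Sum>i<n. \<Sum>j<n. Rt S f m i j) + (\<Sum>i<n. X i)"
    by (simp add: sum.distrib)
  also have "(\<Sum>i<n. \<Sum>j<n. Rt S f m i j) = UU (m - 1) (DD m f) S"
    unfolding expR[OF S] by (rule sum.swap)
  also have "(\<Sum>i<n. X i) = of_nat (card {i\<in>{..<n}. i \<noteq> b \<and> S i = 0 \<and> (\<lambda>l. S l + var_exp i l) \<in> st (Suc m)}) * f S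
      - of_nat (card {i\<in>{..<n}. i \<noteq> b \<and> 0 < S i}) * f S"
    unfolding X_def sum_subtractf sum_ind by simp
  also have "\<dots> = of_int (int (card {i\<in>{..<n}. i \<noteq> b \<and> S i = 0 \<and> (\<lambda>l. S l + var_exp i l) \<in> st (Suc m)})
       - int (card {i\<in>{..<n}. i \<noteq> b \<and> 0 < S i})) * f S"
    by (simp add: algebra_simps)
  also have "\<dots> = of_int (int n - 1 - 2 * int m + (if S b = 0 then 0 else 1)) * f S"
    unfolding count[OF S] ..
  finally show ?thesis .
qed


definition VB :: "bool \<Rightarrow> nat \<Rightarrow> (mono \<Rightarrow> 'a::field_char_0) set" where
  "VB \<beta> m = {f. \<forall>T. f T \<noteq> 0 \<longrightarrow> T \<in> st m \<and> (T b = 0) = \<beta>}"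

definition NB :: "bool \<Rightarrow> nat" where "NB \<beta> = (if \<beta> then n - 1 else n)"

lemma lin_sum: "c * (\<Sum>j\<in>A. F j) + d * (\<Sum>j\<in>A. H j) = (\<Sum>j\<in>A. c * F j + d * H j :: 'a::field)"
  by (simp add: sum_distrib_left sum.distrib)

lemma UU_lin: "UU m (\<lambda>x. c * f x + d * g x) = (\<lambda>x. c * UU m f x + d * UU m g x)"
proof
  fix T
  show "UU m (\<lambda>x. c * f x + d * g x) T = c * UU m f T + d * UU m g T"
  proof (cases "T \<in> st (Suc m)")
    case True
    show ?thesis unfolding UU_def if_P[OF True] lin_sum by (rule sum.cong) (auto simp: algebra_simps)
  qed (simp add: UU_def)
qed

lemma DD_lin: "DD m (\<lambda>x. c * f x + d * g x) = (\<lambda>x. c * DD m f x + d * DD m g x)"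
proof
  fix T
  show "DD m (\<lambda>x. c * f x + d * g x) T = c * DD m f T + d * DD m g T"
  proof (cases "0 < m \<and> T \<in> st (m - 1)")
    case True
    show ?thesis unfolding DD_def if_P[OF True] lin_sum by (rule sum.cong) (auto simp: algebra_simps)
  next
    case False
    then show ?thesis unfolding DD_def if_not_P[OF False] by simp
  qed
qed

lemma UU_V: assumes "f \<in> VB \<beta> m" shows "UU m f \<in> VB \<beta> (Suc m)"
  unfolding VB_def
proof (intro CollectI allI impI)
  fix T assume ne: "UU m f T \<noteq> 0"
  then have T: "T \<in> st (Suc m)" by (auto simp: UU_def split: if_splits)
  with ne have "(\<Sum>j<n. if 0 < T j \<and> (\<lambda>l. T l - var_exp j l) \<in> st m
      then cc j * f (\<lambda>l. T l - var_exp j l) else 0) \<noteq> 0" by (simp add: UU_def)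
  then obtain j where "j \<in> {..<n}" and "(if 0 < T j \<and> (\<lambda>l. T l - var_exp j l) \<in> st m
      then cc j * f (\<lambda>l. T l - var_exp j l) else 0) \<noteq> 0"
    by (rule sum.not_neutral_contains_not_neutral)
  then have j: "j < n" "0 < T j" "cc j * f (\<lambda>l. T l - var_exp j l) \<noteq> 0"
    by (auto split: if_splits)
  then have jb: "j \<noteq> b" and fn: "f (\<lambda>l. T l - var_exp j l) \<noteq> 0" by (auto simp: cc_def split: if_splits)
  then have "(T b - var_exp j b = 0) = \<beta>" using assms unfolding VB_def by blast
  then show "T \<in> st (Suc m) \<and> (T b = 0) = \<beta>" using T jb by (simp add: var_exp_def)
qed

lemma DD_V: assumes "f \<in> VB \<beta> (Suc m)" shows "DD (Suc m) f \<in> VB \<beta> m"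
  unfolding VB_def
proof (intro CollectI allI impI)
  fix T assume ne: "DD (Suc m) f T \<noteq> 0"
  then have T: "T \<in> st m" by (auto simp: DD_def split: if_splits)
  with ne have "(\<Sum>i<n. if i \<noteq> b \<and> T i = 0 \<and> (\<lambda>l. T l + var_exp i l) \<in> st (Suc m)
      then f (\<lambda>l. T l + var_exp i l) else 0) \<noteq> 0" by (simp add: DD_def)
  then obtain i where "i \<in> {..<n}" and "(if i \<noteq> b \<and> T i = 0 \<and> (\<lambda>l. T l + var_exp i l) \<in> st (Suc m)
      then f (\<lambda>l. T l + var_exp i l) else 0) \<noteq> 0"
    by (rule sum.not_neutral_contains_not_neutral)
  then have i: "i < n" "i \<noteq> b" "f (\<lambda>l. T l + var_exp i l) \<noteq> 0"
    by (auto split: if_splits)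
  then have "(T b + var_exp i b = 0) = \<beta>" using assms unfolding VB_def by blast
  then show "T \<in> st m \<and> (T b = 0) = \<beta>" using T i by (simp add: var_exp_def)
qed

lemma UU_zero: "UU m (\<lambda>x. 0) = (\<lambda>x. 0)"
  by (auto simp: UU_def fun_eq_iff intro!: sum.neutral)

lemma DD_comm: assumes f: "f \<in> VB \<beta> m"
  shows "DD (Suc m) (UU m f) = (\<lambda>x. UU (m - 1) (DD m f) x + of_int (int (NB \<beta>) - 2 * int m) * f x)"
proof
  fix S
  show "DD (Suc m) (UU m f) S = UU (m - 1) (DD m f) S + of_int (int (NB \<beta>) - 2 * int m) * f S"
  proof (cases "S \<in> st m")
    case True
    have "of_int (int n - 1 - 2 * int m + (if S b = 0 then 0 else 1)) * f S
        = of_int (int (NB \<beta>) - 2 * int m) * (f S :: 'a)"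
    proof (cases "f S = 0")
      case False
      then have "(S b = 0) = \<beta>" using f unfolding VB_def by blast
      then have eq: "int n - 1 - 2 * int m + (if S b = 0 then 0 else 1) = int (NB \<beta>) - 2 * int m"
        using b by (cases \<beta>) (auto simp: NB_def of_nat_diff)
      show ?thesis by (simp only: eq)
    qed simp
    then show ?thesis using master[OF True, of f] by simp
  next
    case False
    have fS: "f S = 0" using f False unfolding VB_def by blast
    have L: "DD (Suc m) (UU m f) S = 0" using False by (simp add: DD_def)
    have R: "UU (m - 1) (DD m f) S = 0"
    proof (cases m)
      case 0
      then have "DD m f = (\<lambda>x. 0)" by (simp add: DD_def fun_eq_iff)
      then show ?thesis by (simp add: UU_zero)
    next
      case (Suc m')
      then show ?thesis using False by (simp add: UU_def)
    qed
    show ?thesis using L R fS by simp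
  qed
qed

lemma V_top: assumes "NB \<beta> < m" "f \<in> VB \<beta> m" shows "f = (\<lambda>x. 0)"
proof
  fix T show "f T = 0"
  proof (rule ccontr)
    assume "f T \<noteq> 0"
    then have T: "T \<in> st m" and Tb: "(T b = 0) = \<beta>" using assms(2) unfolding VB_def by auto
    have c: "card {i\<in>{..<n}. 0 < T i} = m" using card_O[OF T] .
    show False
    proof (cases \<beta>)
      case True
      then have "{i\<in>{..<n}. 0 < T i} \<subseteq> {..<n} - {b}" using Tb by auto
      then have "card {i\<in>{..<n}. 0 < T i} \<le> card ({..<n} - {b})" by (intro card_mono) auto
      then have "m \<le> card ({..<n} - {b})" using c by simp
      then have "m \<le> n - 1" using b by simp
      then show False using assms(1) True by (simp add: NB_def)
    next
      case False
      have "{i\<in>{..<n}. 0 < T i} \<subseteq> {..<n}" by auto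
      then have "card {i\<in>{..<n}. 0 < T i} \<le> card {..<n}" by (intro card_mono) auto
      then have "m \<le> n" using c by simp
      then show False using assms(1) False by (simp add: NB_def)
    qed
  qed
qed

lemma VB_lin: assumes f: "f \<in> VB \<beta> m" and g: "g \<in> VB \<beta> m"
  shows "(\<lambda>x. c * f x + d * g x) \<in> VB \<beta> m"
  unfolding VB_def
proof (intro CollectI allI impI)
  fix T assume "c * f T + d * g T \<noteq> 0"
  then have "f T \<noteq> 0 \<or> g T \<noteq> 0" by auto
  then show "T \<in> st m \<and> (T b = 0) = \<beta>" using f g unfolding VB_def by blast
qed

lemma VB_zero: "(\<lambda>x. 0) \<in> VB \<beta> m" unfolding VB_def by auto

lemma DD0: "DD 0 f = (\<lambda>x. 0)" by (simp add: DD_def fun_eq_iff)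

end

context wlp_ctx begin
lemma sl2_VB: "sl2 (VB \<beta> :: nat \<Rightarrow> (mono \<Rightarrow> 'a::field_char_0) set) UU DD (NB \<beta>)"
  apply unfold_locales
  apply (rule UU_lin)
  apply (rule DD_lin)
  apply (erule VB_lin, assumption)
  apply (rule VB_zero)
  apply (erule UU_V)
  apply (erule DD_V)
  apply (rule DD0)
  subgoal premises p by (rule DD_comm[OF p])
  apply (rule V_top)
    apply assumption
   apply assumption
  done

lemma "NB \<beta> < m \<Longrightarrow> (f::mono \<Rightarrow> 'a::field_char_0) \<in> VB \<beta> m \<Longrightarrow> f = (\<lambda>x. 0)"
  by (rule V_top)

end

context wlp_ctx begin

definition pr :: "bool \<Rightarrow> (mono \<Rightarrow> 'a::field_char_0) \<Rightarrow> mono \<Rightarrow> 'a" where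
  "pr \<beta> f = (\<lambda>T. if (T b = 0) = \<beta> then f T else 0)"

definition GP :: "nat \<Rightarrow> (mono \<Rightarrow> 'a::field_char_0) set" where
  "GP m = {f. \<forall>T. T \<notin> st m \<longrightarrow> f T = 0}"

lemma pr_VB: "f \<in> GP m \<Longrightarrow> pr \<beta> f \<in> VB \<beta> m"
  unfolding GP_def VB_def pr_def by auto

lemma pr_split: "f = (\<lambda>x. 1 * pr True f x + 1 * pr False f x)"
  unfolding pr_def by auto

lemma pr_same: "g \<in> VB \<beta> m \<Longrightarrow> pr \<beta> g = g"
  unfolding VB_def pr_def by (auto simp: fun_eq_iff)

lemma pr_other: "g \<in> VB \<beta> m \<Longrightarrow> pr (\<not> \<beta>) g = (\<lambda>x. 0)"
  unfolding VB_def pr_def by (auto simp: fun_eq_iff)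

lemma VB_GP: "g \<in> VB \<beta> m \<Longrightarrow> g \<in> GP m"
  unfolding VB_def GP_def by auto

lemma GP_lin: "f \<in> GP m \<Longrightarrow> g \<in> GP m \<Longrightarrow> (\<lambda>x. c * f x + d * g x) \<in> GP m"
  unfolding GP_def by auto

lemma pr_UU: assumes "f \<in> GP m" shows "pr \<beta> (UU m f) = UU m (pr \<beta> f)"
proof -
  have e: "UU m f = (\<lambda>x. 1 * UU m (pr True f) x + 1 * UU m (pr False f) x)"
    by (subst pr_split) (rule UU_lin)
  have V1: "UU m (pr True f) \<in> VB True (Suc m)" using UU_V pr_VB assms by blast
  have V2: "UU m (pr False f) \<in> VB False (Suc m)" using UU_V pr_VB assms by blast
  have s: "pr \<beta> (UU m f) = (\<lambda>x. pr \<beta> (UU m (pr True f)) x + pr \<beta> (UU m (pr False f)) x)"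
    by (subst e) (auto simp: pr_def fun_eq_iff)
  show ?thesis
  proof (cases \<beta>)
    case True
    then show ?thesis unfolding s using pr_same[OF V1] pr_other[OF V2] pr_split[of f] by simp
  next
    case False
    then show ?thesis unfolding s using pr_same[OF V2] pr_other[OF V1] pr_split[of f] by simp
  qed
qed

lemma UU_GP: "UU m f \<in> GP (Suc m)"
  unfolding GP_def UU_def by auto

lemma inj_GP: assumes "2 * m + 2 \<le> n" shows "inj_on (UU m) (GP m :: (mono \<Rightarrow> 'a::field_char_0) set)"
proof (rule inj_onI)
  fix f g :: "mono \<Rightarrow> 'a" assume f: "f \<in> GP m" and g: "g \<in> GP m" and e: "UU m f = UU m g"
  have "pr \<beta> f = pr \<beta> g" for \<beta>
  proof -
    have "2 * m < NB \<beta>" using assms by (auto simp: NB_def)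
    then have "inj_on (UU m) (VB \<beta> m :: (mono \<Rightarrow> 'a) set)" using sl2.inj[OF sl2_VB] by blast
    moreover have "UU m (pr \<beta> f) = UU m (pr \<beta> g)" using pr_UU[OF f] pr_UU[OF g] e by metis
    ultimately show ?thesis using pr_VB[OF f] pr_VB[OF g] by (auto dest: inj_onD)
  qed
  then show "f = g" using pr_split[of f] pr_split[of g] by metis
qed

lemma surj_GP: assumes "n < 2 * m + 2" shows "UU m ` (GP m :: (mono \<Rightarrow> 'a::field_char_0) set) = GP (Suc m)"
proof
  show "UU m ` GP m \<subseteq> GP (Suc m)" using UU_GP by blast
next
  show "GP (Suc m) \<subseteq> UU m ` GP m"
  proof (rule subsetI)
    fix h assume h: "h \<in> GP (Suc m)"
    have ex: "\<exists>f\<in>VB \<beta> m. UU m f = pr \<beta> h" for \<beta>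
    proof -
      have nb: "NB \<beta> < 2 * Suc m" using assms by (auto simp: NB_def)
      obtain f where "f \<in> VB \<beta> (Suc m - 1)" "UU (Suc m - 1) f = pr \<beta> h"
        using sl2.surj[OF sl2_VB nb pr_VB[OF h]] by blast
      then show ?thesis by auto
    qed
    obtain f1 where f1: "f1 \<in> VB True m" "UU m f1 = pr True h" using ex by blast
    obtain f2 where f2: "f2 \<in> VB False m" "UU m f2 = pr False h" using ex by blast
    define f where "f = (\<lambda>x. 1 * f1 x + 1 * f2 x)"
    have "f \<in> GP m" unfolding f_def using GP_lin VB_GP f1 f2 by blast
    moreover have "UU m f = h" unfolding f_def UU_lin f1 f2 using pr_split[of h] by metis
    ultimately show "h \<in> UU m ` GP m" by (metis image_eqI)
  qed
qed

lemma main: assumes std_eq: "\<And>k. std_monos n G k = st k"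
  shows "max_rank_mult n G (cc :: nat \<Rightarrow> 'a::field_char_0) k"
proof -
  have MLe: "mult_lin n G (cc :: nat \<Rightarrow> 'a) m = UU m" for m
    unfolding mult_lin_def UU_def std_eq by (simp add: fun_eq_iff)
  have GPe: "graded_piece n G m = (GP m :: (mono \<Rightarrow> 'a) set)" for m
    unfolding graded_piece_def GP_def std_eq by simp
  show ?thesis
  proof (cases "2 * k + 2 \<le> n")
    case True
    then show ?thesis unfolding max_rank_mult_def MLe GPe using inj_GP by blast
  next
    case False
    then have "UU k ` (GP k :: (mono \<Rightarrow> 'a) set) = GP (Suc k)" by (intro surj_GP) simp
    then show ?thesis unfolding max_rank_mult_def MLe GPe by simp
  qed
qed

end

lemma G_struct:
  assumes Gm: "G \<subseteq> monomials n" and cG: "card G = n + 1" and deg: "\<forall>g\<in>G. mdeg n g = 2"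
    and mn: "minimal_gens G" and art: "artinian_mideal n G"
  shows "\<exists>a b. a < n \<and> b < n \<and> a \<noteq> b \<and> (\<forall>k. std_monos n G k = stdm n a b k)"
proof -
  define sq where "sq i = (\<lambda>j::nat. if j = i then 2 else (0::nat))" for i :: nat
  have sqG: "sq i \<in> G" if i: "i < n" for i
  proof -
    define pw where "pw t = (\<lambda>j. if j = i then t else (0::nat))" for t
    have inj: "inj pw"
    proof (rule injI)
      fix x y assume "pw x = pw y"
      then have "pw x i = pw y i" by simp
      then show "x = y" by (simp add: pw_def)
    qed
    have "\<exists>t. in_mideal G (pw t)"
    proof (rule ccontr)
      assume "\<not> (\<exists>t. in_mideal G (pw t))"
      then have "range pw \<subseteq> {a \<in> monomials n. \<not> in_mideal G a}"
        using i by (auto simp: pw_def monomials_def)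
      then have "finite (range pw)" using art unfolding artinian_mideal_def by (rule finite_subset)
      then have "finite (UNIV :: nat set)" using inj finite_imageD by blast
      then show False by simp
    qed
    then obtain t g where g: "g \<in> G" "mdvd g (pw t)" unfolding in_mideal_def by blast
    have gz: "g j = 0" if "j \<noteq> i" for j
    proof -
      have "g j \<le> pw t j" using g(2) by (simp add: mdvd_def)
      then show ?thesis using that by (simp add: pw_def)
    qed
    have "mdeg n g = (\<Sum>l<n. if l = i then g i else 0)"
      unfolding mdeg_def by (rule sum.cong) (auto simp: gz)
    also have "\<dots> = g i" using i by simp
    finally have "g i = 2" using deg g(1) by simp
    then have "g = sq i" using gz by (auto simp: sq_def fun_eq_iff)
    then show ?thesis using g(1) by simp
  qed
  have Sq: "sq ` {..<n} \<subseteq> G" using sqG by blast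
  have injsq: "inj_on sq {..<n}"
  proof (rule inj_onI)
    fix x y assume "sq x = sq y"
    then have "sq x x = sq y x" by simp
    then show "x = y" by (simp add: sq_def split: if_splits)
  qed
  have cSq: "card (sq ` {..<n}) = n" using card_image[OF injsq] by simp
  have fin: "finite G" using cG card.infinite by force
  have "card (G - sq ` {..<n}) = 1" using card_Diff_subset[OF finite_subset[OF Sq fin] Sq] cG cSq by simp
  then obtain g0 where G0: "G - sq ` {..<n} = {g0}" by (auto simp: card_Suc_eq)
  have g0G: "g0 \<in> G" "g0 \<notin> sq ` {..<n}" using G0 by auto
  have Geq: "G = sq ` {..<n} \<union> {g0}" using G0 Sq by auto
  have g0m: "\<forall>l\<ge>n. g0 l = 0" using Gm g0G by (auto simp: monomials_def)
  have g0deg: "(\<Sum>l<n. g0 l) = 2" using deg g0G by (simp add: mdeg_def)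
  have g0le: "g0 j \<le> 1" for j
  proof (rule ccontr)
    assume "\<not> g0 j \<le> 1"
    then have j2: "2 \<le> g0 j" by simp
    then have jn: "j < n" using g0m by (metis not_le le_zero_eq zero_neq_numeral)
    have "sq j \<in> G - {g0}" using sqG[OF jn] g0G jn by auto
    moreover have "mdvd (sq j) g0" using j2 by (simp add: mdvd_def sq_def)
    ultimately have "in_mideal (G - {g0}) g0" unfolding in_mideal_def by blast
    then show False using mn g0G unfolding minimal_gens_def by blast
  qed
  define Ob where "Ob = {i\<in>{..<n}. g0 i = 1}"
  have "(2::nat) = (\<Sum>l<n. g0 l)" using g0deg by simp
  also have "\<dots> = (\<Sum>l<n. if g0 l = 1 then 1 else 0)"
  proof (intro sum.cong refl)
    fix x have "g0 x = 0 \<or> g0 x = 1" using g0le[of x] by linarith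
    then show "g0 x = (if g0 x = 1 then 1 else 0)" by auto
  qed
  also have "\<dots> = card Ob" unfolding Ob_def by (simp add: sum.inter_filter[symmetric])
  finally have "card Ob = 2" by simp
  then obtain a b where ab: "Ob = {a, b}" "a \<noteq> b" by (auto simp: card_2_iff)
  have abn: "a < n" "b < n" using ab Ob_def by auto
  have g0eq: "g0 l = (if l = a \<or> l = b then 1 else 0)" for l
  proof (cases "l < n")
    case True
    have "g0 l = 1 \<longleftrightarrow> l \<in> Ob" using True Ob_def by simp
    then show ?thesis using g0le[of l] ab by auto
  next
    case False
    then show ?thesis using g0m abn by auto
  qed
  have sqd: "mdvd (sq i) T \<longleftrightarrow> 2 \<le> T i" for i T
    unfolding mdvd_def sq_def
  proof
    assume h: "\<forall>j. (if j = i then 2 else 0) \<le> T j"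
    show "2 \<le> T i" using h[rule_format, of i] by simp
  qed auto
  have g0d: "mdvd g0 T \<longleftrightarrow> 1 \<le> T a \<and> 1 \<le> T b" for T
    unfolding mdvd_def g0eq
  proof
    assume h: "\<forall>l. (if l = a \<or> l = b then 1 else 0) \<le> T l"
    show "1 \<le> T a \<and> 1 \<le> T b" using h[rule_format, of a] h[rule_format, of b] by simp
  qed auto
  have im: "in_mideal G T \<longleftrightarrow> (\<exists>i<n. 2 \<le> T i) \<or> (1 \<le> T a \<and> 1 \<le> T b)" for T
    unfolding in_mideal_def Geq using sqd g0d by auto
  have "std_monos n G k = stdm n a b k" for k
  proof (rule set_eqI)
    fix T
    show "T \<in> std_monos n G k \<longleftrightarrow> T \<in> stdm n a b k"
    proof (cases "\<forall>l\<ge>n. T l = 0")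
      case True
      have "(\<not> (\<exists>i<n. 2 \<le> T i)) \<longleftrightarrow> (\<forall>l. T l \<le> 1)"
      proof
        assume h: "\<not> (\<exists>i<n. 2 \<le> T i)"
        show "\<forall>l. T l \<le> 1"
        proof
          fix l show "T l \<le> 1" using h True by (cases "l < n") (auto simp: not_le)
        qed
      next
        assume h: "\<forall>l. T l \<le> 1"
        show "\<not> (\<exists>i<n. 2 \<le> T i)"
        proof
          assume "\<exists>i<n. 2 \<le> T i"
          then obtain i where "2 \<le> T i" by blast
          moreover have "T i \<le> 1" using h by blast
          ultimately show False by simp
        qed
      qed
      moreover have "(\<forall>l. T l \<le> 1) \<Longrightarrow> (1 \<le> T a \<and> 1 \<le> T b) \<longleftrightarrow> (T a = 1 \<and> T b = 1)"
        by (metis le_antisym)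
      ultimately show ?thesis using True unfolding std_monos_def stdm_def monomials_def mdeg_def im
        by blast
    next
      case False
      then show ?thesis unfolding std_monos_def stdm_def monomials_def by auto
    qed
  qed
  then show ?thesis using abn ab by blast
qed

theorem lemma6p3:
  fixes n :: nat and G :: "mono set"
  assumes "n \<ge> 4"
    and "G \<subseteq> monomials n"
    and "card G = n + 1"
    and "\<forall>g\<in>G. mdeg n g = 2"
    and "minimal_gens G"
    and "artinian_mideal n G"
  shows "has_WLP TYPE('a::field_char_0) n G"
proof -
  obtain a b where ab: "a < n" "b < n" "a \<noteq> b" and st: "\<forall>k. std_monos n G k = stdm n a b k"
    using G_struct[OF assms(2-6)] by blast
  interpret w: wlp_ctx n a b using ab by unfold_locales
  have "\<forall>k. max_rank_mult n G (w.cc :: nat \<Rightarrow> 'a) k" using w.main st by blast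
  then show ?thesis unfolding has_WLP_def by blast
qed

end
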